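(* For every graph $G$, $\mathsf{tww}(G)\le 2\cdot\mathsf{mw}(G)-1$. Consequently, every graph class of bounded cliquewidth also has bounded twin-width.
   Context: All graphs are finite, simple, undirected. For $A\subseteq V(G)$, define $u\sim_A v$ for $u,v\in A$ iff $N(u)\setminus A=N(v)\setminus A$; the diversity of $A$ is the number of classes of $\sim_A$. A laminar decomposition of $G$ is a rooted binary tree whose leaf set is $V(G)$; its diversity is the maximum, over nodes $x$, of the diversity of the set of leaves below $x$. The modular-width $\mathsf{mw}(G)$ is the minimum diversity of a laminar decomposition; a class has bounded cliquewidth iff $\mathsf{mw}$ is bounded on it. For disjoint $A,B\subseteq V(G)$, the pair is impure if it is neither complete (all pairs adjacent) nor anti-complete (no pairs adjacent). For a partition $\mathcal P$ of $V(G)$, the error graph $\mathsf{err}(G,\mathcal P)$ has vertex set $\mathcal P$ with two distinct parts adjacent iff they form an impure pair. A contraction sequence of $G$ (with $n=|V(G)|$) is a sequence of partitions $\mathcal P_n,\ldots,\mathcal P_1$ where $\mathcal P_n$ is the partition into singletons, $\mathcal P_1=\{V(G)\}$, and each $\mathcal P_i$ arises from $\mathcal P_{i+1}$ by merging two parts; its width is the maximum over $i$ of the maximum degree of $\mathsf{err}(G,\mathcal P_i)$. The twin-width $\mathsf{tww}(G)$ is the minimum width of a contraction sequence; a class has bounded twin-width iff $\mathsf{tww}$ is bounded on it. *)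

theory Defs
  imports Main
begin

definition graph :: "'a set \<Rightarrow> ('a \<Rightarrow> 'a \<Rightarrow> bool) \<Rightarrow> bool" where
  "graph V E \<longleftrightarrow> finite V \<and> (\<forall>u v. E u v \<longrightarrow> u \<in> V \<and> v \<in> V)
     \<and> (\<forall>u v. E u v \<longrightarrow> E v u) \<and> (\<forall>u. \<not> E u u)"

definition nbhd :: "'a set \<Rightarrow> ('a \<Rightarrow> 'a \<Rightarrow> bool) \<Rightarrow> 'a \<Rightarrow> 'a set" where
  "nbhd V E u = {w \<in> V. E u w}"

definition twin_rel :: "'a set \<Rightarrow> ('a \<Rightarrow> 'a \<Rightarrow> bool) \<Rightarrow> 'a set \<Rightarrow> ('a \<times> 'a) set" where
  "twin_rel V E A = {(u, v). u \<in> A \<and> v \<in> A \<and> nbhd V E u - A = nbhd V E v - A}"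

definition diversity :: "'a set \<Rightarrow> ('a \<Rightarrow> 'a \<Rightarrow> bool) \<Rightarrow> 'a set \<Rightarrow> nat" where
  "diversity V E A = card (A // twin_rel V E A)"

datatype 'a ltree = Leaf 'a | Node "'a ltree" "'a ltree"

fun leaves :: "'a ltree \<Rightarrow> 'a set" where
  "leaves (Leaf v) = {v}"
| "leaves (Node l r) = leaves l \<union> leaves r"

fun distinct_leaves :: "'a ltree \<Rightarrow> bool" where
  "distinct_leaves (Leaf v) = True"
| "distinct_leaves (Node l r) =
     (distinct_leaves l \<and> distinct_leaves r \<and> leaves l \<inter> leaves r = {})"

fun subtrees :: "'a ltree \<Rightarrow> 'a ltree set" where
  "subtrees (Leaf v) = {Leaf v}"
| "subtrees (Node l r) = insert (Node l r) (subtrees l \<union> subtrees r)"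

definition laminar_decomposition :: "'a set \<Rightarrow> 'a ltree \<Rightarrow> bool" where
  "laminar_decomposition V T \<longleftrightarrow> distinct_leaves T \<and> leaves T = V"

definition dec_diversity :: "'a set \<Rightarrow> ('a \<Rightarrow> 'a \<Rightarrow> bool) \<Rightarrow> 'a ltree \<Rightarrow> nat" where
  "dec_diversity V E T = Max ((\<lambda>x. diversity V E (leaves x)) ` subtrees T)"

definition mw :: "'a set \<Rightarrow> ('a \<Rightarrow> 'a \<Rightarrow> bool) \<Rightarrow> nat" where
  "mw V E = (LEAST d. \<exists>T. laminar_decomposition V T \<and> dec_diversity V E T = d)"

definition impure :: "('a \<Rightarrow> 'a \<Rightarrow> bool) \<Rightarrow> 'a set \<Rightarrow> 'a set \<Rightarrow> bool" where
  "impure E A B \<longleftrightarrow> \<not> (\<forall>a\<in>A. \<forall>b\<in>B. E a b) \<and> \<not> (\<forall>a\<in>A. \<forall>b\<in>B. \<not> E a b)"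

definition err_degree :: "('a \<Rightarrow> 'a \<Rightarrow> bool) \<Rightarrow> 'a set set \<Rightarrow> 'a set \<Rightarrow> nat" where
  "err_degree E P X = card {Y \<in> P. Y \<noteq> X \<and> impure E X Y}"

definition max_err_degree :: "('a \<Rightarrow> 'a \<Rightarrow> bool) \<Rightarrow> 'a set set \<Rightarrow> nat" where
  "max_err_degree E P = Max (err_degree E P ` P)"

text \<open>A contraction sequence P_n, ..., P_1 with n = |V|, given as a function on indices 1..n.\<close>
definition contraction_sequence :: "'a set \<Rightarrow> (nat \<Rightarrow> 'a set set) \<Rightarrow> bool" where
  "contraction_sequence V P \<longleftrightarrow>
     P (card V) = (\<lambda>v. {v}) ` V \<and> P 1 = {V} \<and>
     (\<forall>i. 1 \<le> i \<and> i < card V \<longrightarrow>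
        (\<exists>X Y. X \<in> P (Suc i) \<and> Y \<in> P (Suc i) \<and> X \<noteq> Y \<and>
               P i = insert (X \<union> Y) (P (Suc i) - {X, Y})))"

definition cs_width :: "'a set \<Rightarrow> ('a \<Rightarrow> 'a \<Rightarrow> bool) \<Rightarrow> (nat \<Rightarrow> 'a set set) \<Rightarrow> nat" where
  "cs_width V E P = Max ((\<lambda>i. max_err_degree E (P i)) ` {1..card V})"

definition tww :: "'a set \<Rightarrow> ('a \<Rightarrow> 'a \<Rightarrow> bool) \<Rightarrow> nat" where
  "tww V E = (LEAST w. \<exists>P. contraction_sequence V P \<and> cs_width V E P = w)"

definition bounded_mw :: "('a set \<times> ('a \<Rightarrow> 'a \<Rightarrow> bool)) set \<Rightarrow> bool" where
  "bounded_mw C \<longleftrightarrow> (\<exists>k. \<forall>(V, E) \<in> C. mw V E \<le> k)"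

definition bounded_tww :: "('a set \<times> ('a \<Rightarrow> 'a \<Rightarrow> bool)) set \<Rightarrow> bool" where
  "bounded_tww C \<longleftrightarrow> (\<exists>k. \<forall>(V, E) \<in> C. tww V E \<le> k)"

end

theory Submission imports Defs begin

definition ptn :: "'a set \<Rightarrow> 'a set set \<Rightarrow> bool" where
  "ptn L P \<longleftrightarrow> \<Union>P = L \<and> (\<forall>X\<in>P. X \<noteq> {}) \<and> (\<forall>X\<in>P. \<forall>Y\<in>P. X \<noteq> Y \<longrightarrow> X \<inter> Y = {})"

lemma ptnI: "\<Union>P = L \<Longrightarrow> (\<And>X. X\<in>P \<Longrightarrow> X \<noteq> {}) \<Longrightarrow> (\<And>X Y. X\<in>P \<Longrightarrow> Y\<in>P \<Longrightarrow> X \<noteq> Y \<Longrightarrow> X \<inter> Y = {}) \<Longrightarrow> ptn L P"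
  unfolding ptn_def by simp

lemma ptnD: assumes "ptn L P"
  shows "\<Union>P = L" "X\<in>P \<Longrightarrow> X \<noteq> {}" "X\<in>P \<Longrightarrow> Y\<in>P \<Longrightarrow> X \<noteq> Y \<Longrightarrow> X \<inter> Y = {}"
    "X \<in> P \<Longrightarrow> X \<subseteq> L"
  using assms unfolding ptn_def by blast+

lemma ptn_union: assumes "ptn A P" "ptn B Q" "A \<inter> B = {}" shows "ptn (A \<union> B) (P \<union> Q)"
proof (rule ptnI)
  show "\<Union>(P \<union> Q) = A \<union> B" using ptnD(1)[OF assms(1)] ptnD(1)[OF assms(2)] by simp
  show "X \<noteq> {}" if "X \<in> P \<union> Q" for X using that ptnD(2)[OF assms(1)] ptnD(2)[OF assms(2)] by blast
  show "X \<inter> Y = {}" if a: "X \<in> P \<union> Q" "Y \<in> P \<union> Q" "X \<noteq> Y" for X Y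
  proof -
    consider "X \<in> P" "Y \<in> P" | "X \<in> Q" "Y \<in> Q" | "X \<in> P" "Y \<in> Q" | "X \<in> Q" "Y \<in> P" using a(1,2) by blast
    then show ?thesis
    proof cases
      case 1 then show ?thesis using ptnD(3)[OF assms(1)] a(3) by simp
    next
      case 2 then show ?thesis using ptnD(3)[OF assms(2)] a(3) by simp
    next
      case 3 then have "X \<subseteq> A" "Y \<subseteq> B" using ptnD(4)[OF assms(1)] ptnD(4)[OF assms(2)] by auto
      then show ?thesis using assms(3) by blast
    next
      case 4 then have "X \<subseteq> B" "Y \<subseteq> A" using ptnD(4)[OF assms(1)] ptnD(4)[OF assms(2)] by auto
      then show ?thesis using assms(3) by blast
    qed
  qed
qed

lemma ptn_sing: "ptn L ((\<lambda>v. {v}) ` L)"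
  by (rule ptnI) auto

lemma ptn_finite: assumes "ptn L P" "finite L" shows "finite P"
proof -
  have "P \<subseteq> Pow L" using ptnD(4)[OF assms(1)] by auto
  then show ?thesis using assms(2) by (meson finite_Pow_iff finite_subset)
qed

definition mstep :: "'a set set \<Rightarrow> 'a set set \<Rightarrow> bool" where
  "mstep P P' \<longleftrightarrow> (\<exists>X Y. X \<in> P \<and> Y \<in> P \<and> X \<noteq> Y \<and> P' = insert (X \<union> Y) (P - {X, Y}))"

lemma merge_notin: assumes "ptn L P" "X \<in> P" "Y \<in> P" shows "X \<union> Y \<notin> P - {X, Y}"
proof
  assume "X \<union> Y \<in> P - {X, Y}"
  then have a: "X \<union> Y \<in> P" "X \<union> Y \<noteq> X" by auto
  then have "(X \<union> Y) \<inter> X = {}" using ptnD(3)[OF assms(1) a(1) assms(2)] by blast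
  moreover have "X \<noteq> {}" using ptnD(2)[OF assms(1) assms(2)] .
  ultimately show False by blast
qed

lemma merge_card: assumes "ptn L P" "finite L" "X \<in> P" "Y \<in> P" "X \<noteq> Y"
  shows "card (insert (X \<union> Y) (P - {X, Y})) = card P - 1"
proof -
  have fin: "finite P" using ptn_finite assms by blast
  have "card (insert (X \<union> Y) (P - {X, Y})) = Suc (card (P - {X, Y}))"
    using merge_notin[OF assms(1,3,4)] fin by simp
  moreover have "card (P - {X, Y}) = card P - 2" using assms fin by (simp add: card_Diff_subset)
  moreover have "card {X, Y} \<le> card P" using assms fin by (intro card_mono) auto
  then have "card P \<ge> 2" using assms by simp
  ultimately show ?thesis by simp
qed

lemma mstep_card: assumes "ptn L P" "finite L" "mstep P P'" shows "card P' = card P - 1"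
  using assms merge_card unfolding mstep_def by blast

lemma merge_ptn: assumes "ptn L P" "X \<in> P" "Y \<in> P" shows "ptn L (insert (X \<union> Y) (P - {X, Y}))"
proof (rule ptnI)
  show "\<Union>(insert (X \<union> Y) (P - {X, Y})) = L" using ptnD(1)[OF assms(1)] assms(2,3) by blast
  show "Z \<noteq> {}" if "Z \<in> insert (X \<union> Y) (P - {X, Y})" for Z
    using that ptnD(2)[OF assms(1)] assms(2) by blast
  show "Z \<inter> W = {}" if a: "Z \<in> insert (X \<union> Y) (P - {X, Y})" "W \<in> insert (X \<union> Y) (P - {X, Y})" "Z \<noteq> W" for Z W
  proof (cases "Z = X \<union> Y")
    case True
    then have "W \<in> P" "W \<noteq> X" "W \<noteq> Y" using a by auto
    then show ?thesis using True ptnD(3)[OF assms(1)] assms(2,3) by (simp add: Int_Un_distrib2)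
  next
    case False
    then have Z: "Z \<in> P" "Z \<noteq> X" "Z \<noteq> Y" using a by auto
    show ?thesis
    proof (cases "W = X \<union> Y")
      case True
      then show ?thesis using Z ptnD(3)[OF assms(1)] assms(2,3) by (simp add: Int_Un_distrib)
    next
      case False
      then have "W \<in> P" using a by auto
      then show ?thesis using Z a(3) ptnD(3)[OF assms(1)] by simp
    qed
  qed
qed

lemma mstep_ptn: assumes "ptn L P" "mstep P P'" shows "ptn L P'"
  using assms merge_ptn unfolding mstep_def by blast

lemma rtranclp_list:
  assumes "R\<^sup>*\<^sup>* a b"
  shows "\<exists>xs. xs \<noteq> [] \<and> xs ! 0 = a \<and> last xs = b \<and> (\<forall>i. Suc i < length xs \<longrightarrow> R (xs ! i) (xs ! Suc i))"
  using assms
proof (induction rule: rtranclp_induct)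
  case base
  then show ?case by (intro exI[of _ "[a]"]) simp
next
  case (step y z)
  then obtain xs where xs: "xs \<noteq> []" "xs ! 0 = a" "last xs = y" "\<forall>i. Suc i < length xs \<longrightarrow> R (xs ! i) (xs ! Suc i)"
    by blast
  have "\<forall>i. Suc i < length (xs @ [z]) \<longrightarrow> R ((xs @ [z]) ! i) ((xs @ [z]) ! Suc i)"
  proof (intro allI impI)
    fix i assume i: "Suc i < length (xs @ [z])"
    show "R ((xs @ [z]) ! i) ((xs @ [z]) ! Suc i)"
    proof (cases "Suc i < length xs")
      case True then show ?thesis using xs(4) by (simp add: nth_append)
    next
      case False
      then have "Suc i = length xs" using i by simp
      then have "xs ! i = y" using xs(1,3) by (metis diff_Suc_1 last_conv_nth)
      then show ?thesis using \<open>Suc i = length xs\<close> step.hyps(2) by (simp add: nth_append)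
    qed
  qed
  then show ?case using xs by (intro exI[of _ "xs @ [z]"]) (simp add: nth_append)
qed

locale gr =
  fixes V :: "'a set" and E :: "'a \<Rightarrow> 'a \<Rightarrow> bool"
  assumes G: "graph V E"
begin

definition tw :: "'a set \<Rightarrow> 'a set \<Rightarrow> bool" where
  "tw B X \<longleftrightarrow> (\<forall>u\<in>X. \<forall>v\<in>X. nbhd V E u - B = nbhd V E v - B)"

definition cls :: "'a set \<Rightarrow> 'a set set" where
  "cls L = L // twin_rel V E L"

definition blk :: "nat \<Rightarrow> 'a set set \<Rightarrow> 'a set set \<Rightarrow> bool" where
  "blk d P F \<longleftrightarrow> (\<forall>B\<in>F. \<forall>B'\<in>F. B \<noteq> B' \<longrightarrow> B \<inter> B' = {}) \<and>
     (\<forall>X\<in>P. \<exists>B\<in>F. X \<subseteq> B \<and> tw B X) \<and> (\<forall>B\<in>F. card {X\<in>P. X \<subseteq> B} \<le> 2 * d)"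

definition gstep :: "nat \<Rightarrow> 'a set set \<Rightarrow> 'a set set \<Rightarrow> bool" where
  "gstep d P P' \<longleftrightarrow> mstep P P' \<and> ptn V P' \<and> (\<exists>F. blk d P' F)"

lemma finV: "finite V" using G unfolding graph_def by blast

lemma Esym: "E u v \<Longrightarrow> E v u" using G unfolding graph_def by blast

lemma equiv_tr: "equiv L (twin_rel V E L)"
  unfolding equiv_def refl_on_def sym_def trans_def twin_rel_def by auto

lemma ptn_cls: "ptn L (cls L)"
proof (rule ptnI)
  show "\<Union>(cls L) = L" unfolding cls_def using Union_quotient[OF equiv_tr] .
  show "X \<noteq> {}" if "X \<in> cls L" for X using that unfolding cls_def
    using in_quotient_imp_non_empty[OF equiv_tr] by blast
  show "X \<inter> Y = {}" if "X \<in> cls L" "Y \<in> cls L" "X \<noteq> Y" for X Y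
    using that unfolding cls_def using quotient_disj[OF equiv_tr] by blast
qed

lemma tw_cls: "X \<in> cls L \<Longrightarrow> tw L X"
  unfolding cls_def tw_def quotient_def twin_rel_def by auto

lemma tw_mono: "tw B X \<Longrightarrow> B \<subseteq> L \<Longrightarrow> tw L X"
  unfolding tw_def by blast

lemma pure:
  assumes "X \<subseteq> B" "Y \<subseteq> B'" "B \<inter> B' = {}" "tw B X" "tw B' Y" "X \<subseteq> V" "Y \<subseteq> V"
  shows "\<not> impure E X Y"
proof
  assume "impure E X Y"
  then obtain x1 y1 x2 y2 where a: "x1 \<in> X" "y1 \<in> Y" "E x1 y1" "x2 \<in> X" "y2 \<in> Y" "\<not> E x2 y2"
    unfolding impure_def by blast
  have "y1 \<notin> B" using a(2) assms(2,3) by blast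
  moreover have "y1 \<in> V" using a(2) assms(7) by blast
  ultimately have "y1 \<in> nbhd V E x1 - B" using a(3) unfolding nbhd_def by blast
  moreover have "nbhd V E x1 - B = nbhd V E x2 - B" using assms(4) a(1,4) unfolding tw_def by blast
  ultimately have "y1 \<in> nbhd V E x2 - B" by simp
  then have "E y1 x2" using Esym unfolding nbhd_def by blast
  moreover have "x2 \<notin> B'" using a(4) assms(1,3) by blast
  moreover have "x2 \<in> V" using a(4) assms(6) by blast
  ultimately have "x2 \<in> nbhd V E y1 - B'" unfolding nbhd_def by blast
  moreover have "nbhd V E y1 - B' = nbhd V E y2 - B'" using assms(5) a(2,5) unfolding tw_def by blast
  ultimately have "x2 \<in> nbhd V E y2 - B'" by simp
  then have "E x2 y2" using Esym unfolding nbhd_def by blast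
  then show False using a by blast
qed

lemma err_bound:
  assumes "ptn V P" "blk d P F" "X \<in> P"
  shows "err_degree E P X \<le> 2 * d - 1"
proof -
  have finP: "finite P" using ptn_finite assms finV by blast
  have bF: "\<And>Z. Z \<in> P \<Longrightarrow> \<exists>B\<in>F. Z \<subseteq> B \<and> tw B Z" using assms(2) unfolding blk_def by blast
  have dF: "\<And>B B'. B \<in> F \<Longrightarrow> B' \<in> F \<Longrightarrow> B \<noteq> B' \<Longrightarrow> B \<inter> B' = {}" using assms(2) unfolding blk_def by blast
  obtain B where B: "B \<in> F" "X \<subseteq> B" "tw B X" using bF[OF assms(3)] by blast
  have sub: "{Y \<in> P. Y \<noteq> X \<and> impure E X Y} \<subseteq> {Y \<in> P. Y \<subseteq> B} - {X}"
  proof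
    fix Y assume Y: "Y \<in> {Y \<in> P. Y \<noteq> X \<and> impure E X Y}"
    then have YP: "Y \<in> P" "Y \<noteq> X" "impure E X Y" by auto
    then obtain B' where B': "B' \<in> F" "Y \<subseteq> B'" "tw B' Y" using bF by blast
    have "Y \<subseteq> V" using ptnD(4)[OF assms(1) YP(1)] .
    have "X \<subseteq> V" using ptnD(4)[OF assms(1) assms(3)] .
    show "Y \<in> {Y \<in> P. Y \<subseteq> B} - {X}"
    proof (cases "B = B'")
      case True then show ?thesis using YP B' by blast
    next
      case False
      then have "B \<inter> B' = {}" using dF B(1) B'(1) by blast
      then have "\<not> impure E X Y" using pure B B' \<open>Y \<subseteq> V\<close> \<open>X \<subseteq> V\<close> by blast
      then show ?thesis using YP by blast
    qed
  qed
  have "err_degree E P X \<le> card ({Y \<in> P. Y \<subseteq> B} - {X})"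
    unfolding err_degree_def using sub finP by (intro card_mono) auto
  also have "\<dots> = card {Y \<in> P. Y \<subseteq> B} - 1" using assms(3) B finP by (subst card_Diff_singleton) auto
  also have "\<dots> \<le> 2 * d - 1" using assms(2) B(1) unfolding blk_def by auto
  finally show ?thesis .
qed


lemma blkI:
  assumes "\<And>B B'. B \<in> F \<Longrightarrow> B' \<in> F \<Longrightarrow> B \<noteq> B' \<Longrightarrow> B \<inter> B' = {}"
    "\<And>X. X \<in> P \<Longrightarrow> \<exists>B\<in>F. X \<subseteq> B \<and> tw B X"
    "\<And>B. B \<in> F \<Longrightarrow> card {X\<in>P. X \<subseteq> B} \<le> 2 * d"
  shows "blk d P F"
  unfolding blk_def using assms by simp

lemma blkD:
  assumes "blk d P F"
  shows "B \<in> F \<Longrightarrow> B' \<in> F \<Longrightarrow> B \<noteq> B' \<Longrightarrow> B \<inter> B' = {}"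
    "X \<in> P \<Longrightarrow> \<exists>B\<in>F. X \<subseteq> B \<and> tw B X"
    "B \<in> F \<Longrightarrow> card {X\<in>P. X \<subseteq> B} \<le> 2 * d"
  using assms unfolding blk_def by simp_all

lemma blk_union:
  assumes "blk d Out FOut" "blk d R FR" "\<forall>B\<in>FOut. B \<inter> L = {}" "\<forall>B\<in>FR. B \<subseteq> L"
    "ptn M Out" "M \<inter> L = {}" "M \<subseteq> V" "ptn L R" "L \<subseteq> V"
  shows "blk d (Out \<union> R) (FOut \<union> FR)"
proof (rule blkI)
  have finO: "finite Out" using ptn_finite[OF assms(5)] finV assms(7) finite_subset by blast
  have finR: "finite R" using ptn_finite[OF assms(8)] finV assms(9) finite_subset by blast
  show "B \<inter> B' = {}" if a: "B \<in> FOut \<union> FR" "B' \<in> FOut \<union> FR" "B \<noteq> B'" for B B'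
  proof -
    consider "B \<in> FOut" "B' \<in> FOut" | "B \<in> FR" "B' \<in> FR" | "B \<in> FOut" "B' \<in> FR" | "B \<in> FR" "B' \<in> FOut"
      using a(1,2) by blast
    then show ?thesis
    proof cases
      case 1 then show ?thesis using blkD(1)[OF assms(1)] a(3) by simp
    next
      case 2 then show ?thesis using blkD(1)[OF assms(2)] a(3) by simp
    next
      case 3 then have "B \<inter> L = {}" "B' \<subseteq> L" using assms(3,4) by simp_all
      then show ?thesis by blast
    next
      case 4 then have "B' \<inter> L = {}" "B \<subseteq> L" using assms(3,4) by simp_all
      then show ?thesis by blast
    qed
  qed
  show "\<exists>B\<in>FOut \<union> FR. X \<subseteq> B \<and> tw B X" if a: "X \<in> Out \<union> R" for X
  proof (cases "X \<in> Out")
    case True then obtain B where "B \<in> FOut" "X \<subseteq> B \<and> tw B X" using blkD(2)[OF assms(1)] by blast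
    then show ?thesis by blast
  next
    case False then have "X \<in> R" using a by simp
    then obtain B where "B \<in> FR" "X \<subseteq> B \<and> tw B X" using blkD(2)[OF assms(2)] by blast
    then show ?thesis by blast
  qed
  show "card {X \<in> Out \<union> R. X \<subseteq> B} \<le> 2 * d" if a: "B \<in> FOut \<union> FR" for B
  proof (cases "B \<in> FOut")
    case True
    have BL: "B \<inter> L = {}" using assms(3) True by simp
    have "{X \<in> Out \<union> R. X \<subseteq> B} \<subseteq> {X \<in> Out. X \<subseteq> B}"
    proof
      fix X assume X: "X \<in> {X \<in> Out \<union> R. X \<subseteq> B}"
      then have XB: "X \<subseteq> B" by simp
      show "X \<in> {X \<in> Out. X \<subseteq> B}"
      proof (cases "X \<in> R")
        case True
        then have "X \<subseteq> L" "X \<noteq> {}" using ptnD(2,4)[OF assms(8)] by auto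
        with XB BL have False by blast
        then show ?thesis ..
      next
        case False then show ?thesis using X by simp
      qed
    qed
    then have "card {X \<in> Out \<union> R. X \<subseteq> B} \<le> card {X \<in> Out. X \<subseteq> B}" using finO by (intro card_mono) auto
    also have "\<dots> \<le> 2 * d" using blkD(3)[OF assms(1) True] .
    finally show ?thesis .
  next
    case False
    then have BR: "B \<in> FR" using a by simp
    have BL: "B \<subseteq> L" using assms(4) BR by simp
    have "{X \<in> Out \<union> R. X \<subseteq> B} \<subseteq> {X \<in> R. X \<subseteq> B}"
    proof
      fix X assume X: "X \<in> {X \<in> Out \<union> R. X \<subseteq> B}"
      then have XB: "X \<subseteq> B" by simp
      show "X \<in> {X \<in> R. X \<subseteq> B}"
      proof (cases "X \<in> Out")
        case True
        then have "X \<subseteq> M" "X \<noteq> {}" using ptnD(2,4)[OF assms(5)] by auto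
        with XB BL assms(6) have False by blast
        then show ?thesis ..
      next
        case False then show ?thesis using X by simp
      qed
    qed
    then have "card {X \<in> Out \<union> R. X \<subseteq> B} \<le> card {X \<in> R. X \<subseteq> B}" using finR by (intro card_mono) auto
    also have "\<dots> \<le> 2 * d" using blkD(3)[OF assms(2) BR] .
    finally show ?thesis .
  qed
qed

lemma blk_sing: assumes "1 \<le> d" shows "blk d ((\<lambda>v. {v}) ` A) ((\<lambda>v. {v}) ` A)"
proof -
  have "card {X \<in> (\<lambda>v. {v}) ` A. X \<subseteq> B} \<le> 2 * d" if a: "B \<in> (\<lambda>v. {v}) ` A" for B
  proof -
    obtain v where "B = {v}" using a by blast
    then have "{X \<in> (\<lambda>v. {v}) ` A. X \<subseteq> B} \<subseteq> {{v}}" by auto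
    then have "card {X \<in> (\<lambda>v. {v}) ` A. X \<subseteq> B} \<le> card {{v}}" by (intro card_mono) auto
    then show ?thesis using assms by simp
  qed
  moreover have "tw {v} {v}" for v unfolding tw_def by simp
  ultimately show ?thesis unfolding blk_def by blast
qed

lemma blk_cls: assumes "diversity V E A \<le> d" "A \<subseteq> V" shows "blk d (cls A) {A}"
proof -
  have fin: "finite (cls A)" using ptn_finite[OF ptn_cls] finV assms(2) finite_subset by blast
  have "card {X \<in> cls A. X \<subseteq> A} \<le> card (cls A)" using fin by (intro card_mono) auto
  also have "\<dots> \<le> d" using assms(1) unfolding diversity_def cls_def by simp
  finally have "card {X \<in> cls A. X \<subseteq> A} \<le> 2 * d" by simp
  moreover have "X \<subseteq> A \<and> tw A X" if "X \<in> cls A" for X using that tw_cls ptnD(4)[OF ptn_cls] by blast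
  ultimately show ?thesis unfolding blk_def by blast
qed

lemma no_merge_cls:
  assumes "ptn L R" "\<forall>X\<in>R. tw L X" "\<forall>X\<in>R. \<forall>Y\<in>R. X \<noteq> Y \<longrightarrow> \<not> tw L (X \<union> Y)"
  shows "R = cls L"
proof -
  have key: "X = twin_rel V E L `` {u}" if "X \<in> R" "u \<in> X" for X u
  proof
    have XL: "X \<subseteq> L" using ptnD(4)[OF assms(1) that(1)] .
    show "X \<subseteq> twin_rel V E L `` {u}"
    proof
      fix v assume "v \<in> X"
      then have "nbhd V E u - L = nbhd V E v - L" using assms(2) that unfolding tw_def by blast
      then show "v \<in> twin_rel V E L `` {u}" using XL \<open>v \<in> X\<close> that(2) unfolding twin_rel_def by blast
    qed
    show "twin_rel V E L `` {u} \<subseteq> X"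
    proof
      fix v assume "v \<in> twin_rel V E L `` {u}"
      then have v: "v \<in> L" "nbhd V E u - L = nbhd V E v - L" unfolding twin_rel_def by auto
      then obtain Y where Y: "Y \<in> R" "v \<in> Y" using ptnD(1)[OF assms(1)] by blast
      show "v \<in> X"
      proof (rule ccontr)
        assume "v \<notin> X"
        then have "X \<noteq> Y" using Y by blast
        have "tw L (X \<union> Y)" unfolding tw_def
        proof (intro ballI)
          fix a b assume ab: "a \<in> X \<union> Y" "b \<in> X \<union> Y"
          have "nbhd V E a - L = nbhd V E u - L" if "a \<in> X \<union> Y" for a
          proof (cases "a \<in> X")
            case True then show ?thesis using assms(2) \<open>X \<in> R\<close> \<open>u \<in> X\<close> unfolding tw_def by blast
          next
            case False then have "a \<in> Y" using that by blast
            then have "nbhd V E a - L = nbhd V E v - L" using assms(2) Y unfolding tw_def by blast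
            then show ?thesis using v(2) by simp
          qed
          then show "nbhd V E a - L = nbhd V E b - L" using ab by metis
        qed
        then show False using assms(3) \<open>X \<in> R\<close> Y(1) \<open>X \<noteq> Y\<close> by blast
      qed
    qed
  qed
  show ?thesis
  proof
    show "R \<subseteq> cls L"
    proof
      fix X assume "X \<in> R"
      then obtain u where "u \<in> X" using ptnD(2)[OF assms(1)] by blast
      then have "u \<in> L" using ptnD(4)[OF assms(1) \<open>X \<in> R\<close>] by blast
      then show "X \<in> cls L" unfolding cls_def using key[OF \<open>X \<in> R\<close> \<open>u \<in> X\<close>] quotientI by metis
    qed
    show "cls L \<subseteq> R"
    proof
      fix C assume "C \<in> cls L"
      then obtain x where x: "x \<in> L" "C = twin_rel V E L `` {x}" unfolding cls_def quotient_def by blast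
      then obtain X where "X \<in> R" "x \<in> X" using ptnD(1)[OF assms(1)] by blast
      then show "C \<in> R" using key x by metis
    qed
  qed
qed


lemma merge_phase:
  assumes Out: "ptn (V - L) Out" "blk d Out FOut" "\<forall>B\<in>FOut. B \<inter> L = {}" and LV: "L \<subseteq> V"
  shows "ptn L R \<Longrightarrow> (\<forall>X\<in>R. tw L X) \<Longrightarrow> card R \<le> 2 * d \<Longrightarrow> (gstep d)\<^sup>*\<^sup>* (Out \<union> R) (Out \<union> cls L)"
proof (induction "card R" arbitrary: R rule: less_induct)
  case less
  have finL: "finite L" using LV finV finite_subset by blast
  show ?case
  proof (cases "\<exists>X\<in>R. \<exists>Y\<in>R. X \<noteq> Y \<and> tw L (X \<union> Y)")
    case False
    then have "R = cls L" using no_merge_cls[OF less.prems(1,2)] by blast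
    then show ?thesis by simp
  next
    case True
    then obtain X Y where XY: "X \<in> R" "Y \<in> R" "X \<noteq> Y" "tw L (X \<union> Y)" by blast
    define R' where "R' = insert (X \<union> Y) (R - {X, Y})"
    have pR': "ptn L R'" unfolding R'_def using merge_ptn[OF less.prems(1) XY(1,2)] .
    have twR': "\<forall>Z\<in>R'. tw L Z" unfolding R'_def using XY(4) less.prems(2) by blast
    have cR': "card R' = card R - 1" unfolding R'_def using merge_card[OF less.prems(1) finL XY(1-3)] .
    have "card R \<noteq> 0" using XY(1) ptn_finite[OF less.prems(1) finL] by auto
    then have lt: "card R' < card R" using cR' by simp
    have IH: "(gstep d)\<^sup>*\<^sup>* (Out \<union> R') (Out \<union> cls L)"
      using less.hyps[OF lt pR' twR'] cR' less.prems(3) by simp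
    have XnO: "X \<notin> Out" "Y \<notin> Out"
    proof -
      have "X \<subseteq> L" "X \<noteq> {}" "Y \<subseteq> L" "Y \<noteq> {}" using ptnD(2,4)[OF less.prems(1)] XY(1,2) by auto
      moreover have "\<And>Z. Z \<in> Out \<Longrightarrow> Z \<subseteq> V - L" using ptnD(4)[OF Out(1)] by blast
      ultimately show "X \<notin> Out" "Y \<notin> Out" by blast+
    qed
    have eq: "Out \<union> R' = insert (X \<union> Y) ((Out \<union> R) - {X, Y})"
      unfolding R'_def using XnO by auto
    have ms: "mstep (Out \<union> R) (Out \<union> R')"
      unfolding mstep_def using XY(1-3) eq by blast
    have "V = (V - L) \<union> L" using LV by blast
    then have pt: "ptn V (Out \<union> R')" using ptn_union[OF Out(1) pR'] by (metis Diff_disjoint inf_commute)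
    have bR': "blk d R' {L}"
    proof (rule blkI)
      show "B \<inter> B' = {}" if "B \<in> {L}" "B' \<in> {L}" "B \<noteq> B'" for B B' using that by simp
      show "\<exists>B\<in>{L}. Z \<subseteq> B \<and> tw B Z" if "Z \<in> R'" for Z using that twR' ptnD(4)[OF pR'] by blast
      have fR': "finite R'" using ptn_finite[OF pR' finL] .
      show "card {Z \<in> R'. Z \<subseteq> B} \<le> 2 * d" if "B \<in> {L}" for B
      proof -
        have "card {Z \<in> R'. Z \<subseteq> B} \<le> card R'" using fR' by (intro card_mono) auto
        then show ?thesis using cR' less.prems(3) by simp
      qed
    qed
    have "blk d (Out \<union> R') (FOut \<union> {L})"
      using blk_union[OF Out(2) bR' Out(3) _ Out(1) _ _ pR' LV] by auto
    then have "gstep d (Out \<union> R) (Out \<union> R')" unfolding gstep_def using ms pt by blast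
    then show ?thesis using IH by (rule converse_rtranclp_into_rtranclp)
  qed
qed



lemma cls_single: "cls {v} = {{v}}"
  unfolding cls_def quotient_def twin_rel_def by auto

lemma subtrees_self: "T \<in> subtrees T"
  by (cases T) auto

lemma tree_phase:
  "distinct_leaves T \<Longrightarrow> leaves T \<subseteq> V \<Longrightarrow> (\<forall>S\<in>subtrees T. diversity V E (leaves S) \<le> d) \<Longrightarrow> 1 \<le> d
   \<Longrightarrow> ptn (V - leaves T) Out \<Longrightarrow> blk d Out FOut \<Longrightarrow> (\<forall>B\<in>FOut. B \<inter> leaves T = {})
   \<Longrightarrow> (gstep d)\<^sup>*\<^sup>* (Out \<union> (\<lambda>v. {v}) ` leaves T) (Out \<union> cls (leaves T))"
proof (induction T arbitrary: Out FOut)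
  case (Leaf v)
  then show ?case using cls_single by simp
next
  case (Node l r)
  define Ll where "Ll = leaves l"
  define Lr where "Lr = leaves r"
  define L where "L = leaves (Node l r)"
  have L: "L = Ll \<union> Lr" unfolding L_def Ll_def Lr_def by simp
  have disj: "Ll \<inter> Lr = {}" using Node.prems(1) unfolding Ll_def Lr_def by simp
  have dl: "distinct_leaves l" "distinct_leaves r" using Node.prems(1) by auto
  have LV: "L \<subseteq> V" "Ll \<subseteq> V" "Lr \<subseteq> V" using Node.prems(2) L unfolding L_def by auto
  have divl: "\<forall>S\<in>subtrees l. diversity V E (leaves S) \<le> d" using Node.prems(3) by simp
  have divr: "\<forall>S\<in>subtrees r. diversity V E (leaves S) \<le> d" using Node.prems(3) by simp
  have dLl: "diversity V E Ll \<le> d" using divl subtrees_self unfolding Ll_def by blast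
  have dLr: "diversity V E Lr \<le> d" using divr subtrees_self unfolding Lr_def by blast
  have pO: "ptn (V - L) Out" using Node.prems(5) unfolding L_def .
  have FOL: "\<forall>B\<in>FOut. B \<inter> L = {}" using Node.prems(7) unfolding L_def .
  have VL: "(V - L) \<inter> Ll = {}" "(V - L) \<inter> Lr = {}" "V - L \<subseteq> V" using L by auto
  define O1 where "O1 = Out \<union> (\<lambda>v. {v}) ` Lr"
  define F1 where "F1 = FOut \<union> (\<lambda>v. {v}) ` Lr"
  have "V - Ll = (V - L) \<union> Lr" using L disj LV by blast
  then have pO1: "ptn (V - Ll) O1" unfolding O1_def using ptn_union[OF pO ptn_sing VL(2)] by simp
  have bO1: "blk d O1 F1" unfolding O1_def F1_def
  proof (rule blk_union[where M="V - L" and L=Lr, OF Node.prems(6) blk_sing[OF Node.prems(4)]])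
    show "\<forall>B\<in>FOut. B \<inter> Lr = {}" using FOL L by blast
  qed (use VL LV ptn_sing pO in auto)
  have F1L: "\<forall>B\<in>F1. B \<inter> leaves l = {}" unfolding F1_def Ll_def[symmetric] using FOL L disj by blast
  have s1: "(gstep d)\<^sup>*\<^sup>* (O1 \<union> (\<lambda>v. {v}) ` Ll) (O1 \<union> cls Ll)"
    using Node.IH(1)[OF dl(1) _ divl Node.prems(4) _ bO1 F1L] pO1 LV unfolding Ll_def by blast
  define O2 where "O2 = Out \<union> cls Ll"
  define F2 where "F2 = FOut \<union> {Ll}"
  have "V - Lr = (V - L) \<union> Ll" using L disj LV by blast
  then have pO2: "ptn (V - Lr) O2" unfolding O2_def using ptn_union[OF pO ptn_cls VL(1)] by simp
  have bO2: "blk d O2 F2" unfolding O2_def F2_def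
  proof (rule blk_union[where M="V - L" and L=Ll, OF Node.prems(6) blk_cls[OF dLl LV(2)]])
    show "\<forall>B\<in>FOut. B \<inter> Ll = {}" using FOL L by blast
  qed (use VL LV ptn_cls pO in auto)
  have F2L: "\<forall>B\<in>F2. B \<inter> leaves r = {}" unfolding F2_def Lr_def[symmetric] using FOL L disj by blast
  have s2: "(gstep d)\<^sup>*\<^sup>* (O2 \<union> (\<lambda>v. {v}) ` Lr) (O2 \<union> cls Lr)"
    using Node.IH(2)[OF dl(2) _ divr Node.prems(4) _ bO2 F2L] pO2 LV unfolding Lr_def by blast
  have pR: "ptn L (cls Ll \<union> cls Lr)" unfolding L using ptn_union[OF ptn_cls ptn_cls disj] .
  have twR: "\<forall>X\<in>cls Ll \<union> cls Lr. tw L X" using tw_cls tw_mono L by blast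
  have finl: "finite Ll" "finite Lr" using LV finV finite_subset by blast+
  have "card (cls Ll \<union> cls Lr) \<le> card (cls Ll) + card (cls Lr)" by (rule card_Un_le)
  also have "\<dots> \<le> 2 * d" using dLl dLr unfolding diversity_def cls_def by simp
  finally have cR: "card (cls Ll \<union> cls Lr) \<le> 2 * d" .
  have s3: "(gstep d)\<^sup>*\<^sup>* (Out \<union> (cls Ll \<union> cls Lr)) (Out \<union> cls L)"
    using merge_phase[OF pO Node.prems(6) FOL LV(1) pR twR cR] .
  have e1: "Out \<union> (\<lambda>v. {v}) ` L = O1 \<union> (\<lambda>v. {v}) ` Ll" unfolding O1_def L by auto
  have e2: "O1 \<union> cls Ll = O2 \<union> (\<lambda>v. {v}) ` Lr" unfolding O1_def O2_def by auto
  have e3: "O2 \<union> cls Lr = Out \<union> (cls Ll \<union> cls Lr)" unfolding O2_def by auto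
  have "(gstep d)\<^sup>*\<^sup>* (Out \<union> (\<lambda>v. {v}) ` L) (Out \<union> cls L)"
    using s1 s2 s3 unfolding e1 e2 e3 by (meson rtranclp_trans)
  then show ?case unfolding L_def .
qed


lemma cls_V: assumes "V \<noteq> {}" shows "cls V = {V}"
proof -
  have "twin_rel V E V `` {x} = V" if "x \<in> V" for x
    using that unfolding twin_rel_def nbhd_def by auto
  then show ?thesis unfolding cls_def quotient_def using assms by auto
qed

lemma finite_subtrees: "finite (subtrees T)"
  by (induction T) auto

lemma good_chain:
  assumes "V \<noteq> {}" "laminar_decomposition V T"
  shows "tww V E \<le> 2 * dec_diversity V E T - 1"
proof -
  define d where "d = dec_diversity V E T"
  have dT: "distinct_leaves T" "leaves T = V" using assms(2) unfolding laminar_decomposition_def by auto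
  have div: "\<forall>S\<in>subtrees T. diversity V E (leaves S) \<le> d"
    unfolding d_def dec_diversity_def using finite_subtrees by (auto intro!: Max_ge)
  have "diversity V E V = 1" unfolding diversity_def using cls_V[OF assms(1)] unfolding cls_def by simp
  then have d1: "1 \<le> d" using div subtrees_self dT(2) by metis
  have pe: "ptn (V - leaves T) {}" by (rule ptnI) (auto simp: dT)
  have be: "blk d {} {}" by (rule blkI) auto
  have "(gstep d)\<^sup>*\<^sup>* ({} \<union> (\<lambda>v. {v}) ` leaves T) ({} \<union> cls (leaves T))"
    using tree_phase[OF dT(1) _ div d1 pe be] dT by simp
  then have ch: "(gstep d)\<^sup>*\<^sup>* ((\<lambda>v. {v}) ` V) {V}" using cls_V[OF assms(1)] dT by simp
  obtain xs where xs: "xs \<noteq> []" "xs ! 0 = (\<lambda>v. {v}) ` V" "last xs = {V}"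
     "\<And>i. Suc i < length xs \<Longrightarrow> gstep d (xs ! i) (xs ! Suc i)"
    using rtranclp_list[OF ch] by blast
  have good: "ptn V (xs ! i) \<and> (\<exists>F. blk d (xs ! i) F)" if "i < length xs" for i
  proof (cases i)
    case 0 then show ?thesis using xs(2) ptn_sing blk_sing[OF d1, of V] by auto
  next
    case (Suc j) then show ?thesis using xs(4)[of j] that unfolding gstep_def by auto
  qed
  have cardi: "card (xs ! i) = card V - i" if "i < length xs" for i
    using that
  proof (induction i)
    case 0 then show ?case using xs(2) by (simp add: card_image)
  next
    case (Suc i)
    then have "mstep (xs ! i) (xs ! Suc i)" using xs(4) unfolding gstep_def by blast
    then have "card (xs ! Suc i) = card (xs ! i) - 1" using mstep_card good[of i] Suc.prems finV by auto
    then show ?case using Suc by simp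
  qed
  define n where "n = card V"
  have n1: "n \<ge> 1" unfolding n_def using assms(1) finV by (simp add: Suc_leI card_gt_0_iff)
  have "card (xs ! (length xs - 1)) = 1" using xs(1,3) by (simp add: last_conv_nth)
  then have "n - (length xs - 1) = 1" using cardi[of "length xs - 1"] xs(1) unfolding n_def by simp
  then have len: "length xs = n" using n1 xs(1) by (cases xs) auto
  define Pf where "Pf i = xs ! (n - i)" for i
  have cs: "contraction_sequence V Pf"
    unfolding contraction_sequence_def
  proof (intro conjI allI impI)
    show "Pf (card V) = (\<lambda>v. {v}) ` V" unfolding Pf_def n_def using xs(2) by simp
    show "Pf 1 = {V}" unfolding Pf_def using xs(1,3) len by (simp add: last_conv_nth)
    fix i assume i: "1 \<le> i \<and> i < card V"
    then have "Suc (n - Suc i) < length xs" using len unfolding n_def by arith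
    moreover have "Suc (n - Suc i) = n - i" using i unfolding n_def by arith
    ultimately have "gstep d (Pf (Suc i)) (Pf i)" using xs(4)[of "n - Suc i"] unfolding Pf_def by simp
    then show "\<exists>X Y. X \<in> Pf (Suc i) \<and> Y \<in> Pf (Suc i) \<and> X \<noteq> Y \<and> Pf i = insert (X \<union> Y) (Pf (Suc i) - {X, Y})"
      unfolding gstep_def mstep_def by blast
  qed
  have w: "cs_width V E Pf \<le> 2 * d - 1"
    unfolding cs_width_def
  proof (subst Max_le_iff)
    show "finite ((\<lambda>i. max_err_degree E (Pf i)) ` {1..card V})" by simp
    show "(\<lambda>i. max_err_degree E (Pf i)) ` {1..card V} \<noteq> {}" using n1 unfolding n_def by simp
    show "\<forall>a\<in>(\<lambda>i. max_err_degree E (Pf i)) ` {1..card V}. a \<le> 2 * d - 1"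
    proof
      fix a assume "a \<in> (\<lambda>i. max_err_degree E (Pf i)) ` {1..card V}"
      then obtain i where i: "i \<in> {1..card V}" "a = max_err_degree E (Pf i)" by blast
      have "n - i < length xs" using i len n1 unfolding n_def by auto
      then obtain F where pF: "ptn V (Pf i)" "blk d (Pf i) F" using good unfolding Pf_def by blast
      have fin: "finite (Pf i)" using ptn_finite[OF pF(1) finV] .
      have ne: "Pf i \<noteq> {}" using pF(1) assms(1) ptnD(1) by fastforce
      show "a \<le> 2 * d - 1" unfolding i(2) max_err_degree_def
        using err_bound[OF pF] fin ne by (subst Max_le_iff) auto
    qed
  qed
  have "tww V E \<le> cs_width V E Pf" unfolding tww_def using cs by (intro Least_le) blast
  then show ?thesis using w d_def by simp
qed

end

lemma exists_lam: "finite V \<Longrightarrow> V \<noteq> {} \<Longrightarrow> \<exists>T. laminar_decomposition V T"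
proof (induction V rule: finite_ne_induct)
  case (singleton x)
  have "laminar_decomposition {x} (Leaf x)" unfolding laminar_decomposition_def by simp
  then show ?case by blast
next
  case (insert x F)
  then obtain T where "laminar_decomposition F T" by blast
  then have "laminar_decomposition (insert x F) (Node (Leaf x) T)"
    using insert.hyps unfolding laminar_decomposition_def by auto
  then show ?case by blast
qed

lemma tww_mw: assumes "graph V E" "V \<noteq> {}" shows "tww V E \<le> 2 * mw V E - 1"
proof -
  interpret gr V E using assms(1) by unfold_locales
  obtain T0 where "laminar_decomposition V T0" using exists_lam finV assms(2) by blast
  then have "\<exists>d T. laminar_decomposition V T \<and> dec_diversity V E T = d" by blast
  then have "\<exists>T. laminar_decomposition V T \<and> dec_diversity V E T = mw V E"
    unfolding mw_def by (rule LeastI_ex)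
  then obtain T where "laminar_decomposition V T" "dec_diversity V E T = mw V E" by blast
  then show ?thesis using good_chain[OF assms(2)] by metis
qed

theorem theorem3p43:
  shows "(\<forall>(V :: 'a set) E. graph V E \<and> V \<noteq> {} \<longrightarrow> tww V E \<le> 2 * mw V E - 1) \<and>
         (\<forall>C :: ('a set \<times> ('a \<Rightarrow> 'a \<Rightarrow> bool)) set.
            (\<forall>(V, E) \<in> C. graph V E \<and> V \<noteq> {}) \<longrightarrow> bounded_mw C \<longrightarrow> bounded_tww C)"
proof (intro conjI allI impI)
  fix V :: "'a set" and E assume "graph V E \<and> V \<noteq> {}"
  then show "tww V E \<le> 2 * mw V E - 1" using tww_mw by blast
next
  fix C :: "('a set \<times> ('a \<Rightarrow> 'a \<Rightarrow> bool)) set"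
  assume C: "\<forall>(V, E) \<in> C. graph V E \<and> V \<noteq> {}" and "bounded_mw C"
  then obtain k where k: "\<forall>(V, E) \<in> C. mw V E \<le> k" unfolding bounded_mw_def by blast
  have "\<forall>(V, E) \<in> C. tww V E \<le> 2 * k - 1"
  proof (intro ballI, clarify)
    fix V E assume "(V, E) \<in> C"
    then have "graph V E" "V \<noteq> {}" "mw V E \<le> k" using C k by auto
    then show "tww V E \<le> 2 * k - 1" using tww_mw[of V E] by linarith
  qed
  then show "bounded_tww C" unfolding bounded_tww_def by blast
qed

end
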